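(* Every product of finitely many iterated log-sine integrals ${\rm Ls}_{\mathbf{k}}^{\mathbf{l}}(\pi/3)$ whose index pairs satisfy $k_j-1-l_j\ge 0$ for all $j$ can be written as a $\mathbb{Q}$-linear combination of products $\pi^m\cdot{\rm Ls}_{\mathbf{k}'}^{\mathbf{l}'}(\pi/3)$ with $m\in\mathbb{Z}_{\ge0}$, where each ${\rm Ls}_{\mathbf{k}'}^{\mathbf{l}'}(\pi/3)$ is an iterated log-sine integral at $\pi/3$ whose index pair satisfies $k'_j-1-l'_j>0$ for all $j$.
   Context: Let $A(\theta)=\log|2\sin(\theta/2)|$. For $\sigma\ge 0$, $\mathbf{k}=(k_1,\dots,k_n)\in\mathbb{N}^n$ and $\mathbf{l}=(l_1,\dots,l_n)\in\mathbb{Z}_{\ge0}^n$, the iterated log-sine integral is \[{\rm Ls}_{\mathbf{k}}^{\mathbf{l}}(\sigma)=(-1)^{n}\int_{0<\theta_{1}<\dots<\theta_{n}<\sigma}\prod_{u=1}^{n}\theta_u^{l_u}A^{k_u-1-l_u}(\theta_{u})\,d\theta_u .\] *)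

theory Defs
  imports "HOL-Analysis.Analysis"
begin

definition logsineA :: "real \<Rightarrow> real" where
  "logsineA \<theta> = ln \<bar>2 * sin (\<theta> / 2)\<bar>"

text \<open>The argument list is given from the outermost variable
  inwards: for the list [(k_n,l_n), ..., (k_1,l_1)] this is
  the integral over 0 < theta_1 < ... < theta_n < sigma of
  prod_u theta_u^l_u * A(theta_u)^(k_u-1-l_u).\<close>
fun ls_nested :: "(nat \<times> nat) list \<Rightarrow> real \<Rightarrow> real" where
  "ls_nested [] \<sigma> = 1"
| "ls_nested ((k, l) # rest) \<sigma> =
     integral {0..\<sigma>} (\<lambda>\<theta>. \<theta> ^ l * (logsineA \<theta> powi (int k - 1 - int l)) * ls_nested rest \<theta>)"

text \<open>Iterated log-sine integral Ls_k^l(sigma); the multi-index (k,l) is given as the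
  list of pairs [(k_1,l_1), ..., (k_n,l_n)].\<close>
definition Ls :: "(nat \<times> nat) list \<Rightarrow> real \<Rightarrow> real" where
  "Ls kl \<sigma> = (-1) ^ length kl * ls_nested (rev kl) \<sigma>"

end

theory Submission
  imports Defs
begin

lemma sin_lower: fixes x :: real assumes "0 \<le> x" "x \<le> 1" shows "x / 2 \<le> sin x"
proof -
  have "\<bar>sin x - (\<Sum>m<3. sin_coeff m * x ^ m)\<bar> \<le> inverse (fact 3) * \<bar>x\<bar> ^ 3"
    by (rule Maclaurin_sin_bound)
  moreover have "(\<Sum>m<3. sin_coeff m * x ^ m) = x"
    by (simp add: numeral_3_eq_3 sin_coeff_def)
  ultimately have "x - x^3/6 \<le> sin x" using assms by (simp add: fact_numeral abs_if split: if_splits)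
  moreover have "x^3 \<le> x"
  proof -
    have "x*x \<le> 1" using assms by (simp add: mult_le_one)
    then have "x*x*x \<le> 1*x" using assms by (intro mult_right_mono) auto
    then show ?thesis by (simp add: power3_eq_cube)
  qed
  ultimately show ?thesis using assms by linarith
qed

lemma A_bounds: assumes "0 < t" "t \<le> pi/3"
  shows "ln (t/2) \<le> logsineA t" "logsineA t \<le> 0"
proof -
  have p: "pi < 4" using pi_less_4 .
  have "t/2 \<le> 1" using assms p by simp
  then have s1: "t/4 \<le> sin (t/2)" using sin_lower[of "t/2"] assms by simp
  have "sin (t/2) \<le> sin (pi/6)"
    using assms by (intro sin_monotone_2pi_le) auto
  then have s2: "sin (t/2) \<le> 1/2" by (simp add: sin_30)
  have pos: "0 < sin (t/2)" using s1 assms by linarith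
  have e: "logsineA t = ln (2 * sin (t/2))" using pos by (simp add: logsineA_def)
  show "ln (t/2) \<le> logsineA t" unfolding e using s1 assms by (subst ln_le_cancel_iff) auto
  show "logsineA t \<le> 0" unfolding e using s2 pos by simp
qed

lemma A_cont: "continuous_on {0<..pi/3} logsineA"
proof -
  have "\<And>t. t \<in> {0<..pi/3} \<Longrightarrow> 0 < sin (t/2)"
    using pi_gt3 by (intro sin_gt_zero) auto
  then show ?thesis unfolding logsineA_def
    by (intro continuous_intros) (auto dest!: \<open>\<And>t. _ \<Longrightarrow> 0 < sin (t/2)\<close>)
qed


lemma ln_pow_bound: fixes y :: real assumes "1 \<le> y"
  shows "ln y ^ j \<le> (2 * real j) ^ j * y powr (1/2)"
proof (cases "j = 0")
  case True then show ?thesis using assms by (simp add: ge_one_powr_ge_zero)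
next
  case False
  define n where "n = 2 * real j"
  have n: "n > 0" using False n_def by simp
  have "ln y = n * ln (y powr (1/n))" using assms n by (simp add: ln_powr)
  also have "\<dots> \<le> n * (y powr (1/n))"
    using ln_le_minus_one[of "y powr (1/n)"] assms n by (intro mult_left_mono) auto
  finally have "ln y \<le> n * y powr (1/n)" .
  moreover have "0 \<le> ln y" using assms by simp
  ultimately have "ln y ^ j \<le> (n * y powr (1/n)) ^ j" by (rule power_mono)
  also have "\<dots> = n ^ j * (y powr (1/n)) ^ j" by (simp add: power_mult_distrib)
  also have "(y powr (1/n)) ^ j = y powr (1/2)"
    using assms n False by (simp add: powr_realpow[symmetric] powr_powr n_def)
  finally show ?thesis by (simp add: n_def)
qed

lemma A_pow_bound: assumes "0 < t" "t \<le> pi/3"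
  shows "\<bar>logsineA t\<bar> ^ j \<le> (2 * real j) ^ j * sqrt 2 * t powr (-1/2)"
proof -
  have "\<bar>logsineA t\<bar> \<le> ln (2/t)"
    using A_bounds[OF assms] assms by (simp add: ln_div)
  moreover have "1 \<le> 2/t" using assms pi_less_4 by simp
  ultimately have "\<bar>logsineA t\<bar> ^ j \<le> ln (2/t) ^ j" by (intro power_mono) auto
  also have "\<dots> \<le> (2 * real j) ^ j * (2/t) powr (1/2)" by (rule ln_pow_bound) fact
  also have "(2/t) powr (1/2) = sqrt 2 * t powr (-1/2)"
    using assms by (simp add: powr_divide powr_minus divide_simps powr_half_sqrt)
  finally show ?thesis by simp
qed

lemma A_pow_absint: "(\<lambda>t. logsineA t ^ j) absolutely_integrable_on {0<..pi/3}"
proof (rule measurable_bounded_by_integrable_imp_absolutely_integrable)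
  show "(\<lambda>t. logsineA t ^ j) \<in> borel_measurable (lebesgue_on {0<..pi/3})"
    by (intro continuous_imp_measurable_on_sets_lebesgue continuous_intros A_cont) auto
  show "{0<..pi/3} \<in> sets lebesgue" by simp
  show "(\<lambda>t. (2 * real j) ^ j * sqrt 2 * t powr (-1/2)) integrable_on {0<..pi/3}"
  proof -
    have "(\<lambda>t. t powr (-1/2)) integrable_on {0<..pi/3}"
      by (intro integrable_on_powr_from_0') auto
    from integrable_on_cmult_left[OF this, of "(2 * real j) ^ j * sqrt 2"] show ?thesis by simp
  qed
  show "norm (logsineA t ^ j) \<le> (2 * real j) ^ j * sqrt 2 * t powr (-1/2)" if "t \<in> {0<..pi/3}" for t
    using A_pow_bound[of t j] that by (simp add: power_abs)
qed


lemma INT0: assumes h: "continuous_on {0..pi/3} h"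
  shows "(\<lambda>t. logsineA t ^ j * h t) integrable_on {0..pi/3}"
proof -
  have hb: "bounded (h ` {0..pi/3})"
    by (intro compact_imp_bounded compact_continuous_image h) auto
  have "(\<lambda>t. h t * logsineA t ^ j) absolutely_integrable_on {0<..pi/3}"
  proof (rule absolutely_integrable_bounded_measurable_product_real)
    show "h \<in> borel_measurable (lebesgue_on {0<..pi/3})"
      by (intro continuous_imp_measurable_on_sets_lebesgue continuous_on_subset[OF h]) auto
    show "bounded (h ` {0<..pi/3})" using hb by (rule bounded_subset) auto
  qed (auto intro: A_pow_absint)
  then have "(\<lambda>t. h t * logsineA t ^ j) integrable_on {0<..pi/3}"
    using set_lebesgue_integral_eq_integral(1) absolutely_integrable_on_def by blast
  then have "(\<lambda>t. logsineA t ^ j * h t) integrable_on {0<..pi/3}"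
    by (simp add: mult.commute)
  then show ?thesis
  proof (rule integrable_spike_set)
    show "negligible {x \<in> {0<..pi/3} - {0..pi/3}. logsineA x ^ j * h x \<noteq> 0}"
      by (rule negligible_subset[of "{}"]) auto
    show "negligible {x \<in> {0..pi/3} - {0<..pi/3}. logsineA x ^ j * h x \<noteq> 0}"
      by (rule negligible_subset[of "{0::real}"]) auto
  qed
qed

lemma INT: assumes h: "continuous_on {0..pi/3} h" and e: "0 \<le> e"
  and s: "0 \<le> s" "s \<le> pi/3"
  shows "(\<lambda>t. t ^ l * logsineA t powi e * h t) integrable_on {0..s}"
proof -
  have "continuous_on {0..pi/3} (\<lambda>t. t ^ l * h t)" by (intro continuous_intros h)
  from INT0[OF this, of "nat e"]
  have "(\<lambda>t. t ^ l * logsineA t powi e * h t) integrable_on {0..pi/3}"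
    using e by (simp add: power_int_def mult_ac)
  then show ?thesis by (rule integrable_on_subinterval) (use s in auto)
qed


definition okw :: "(nat \<times> nat) list \<Rightarrow> bool" where
  "okw w \<longleftrightarrow> (\<forall>p\<in>set w. snd p < fst p)"
definition goodw :: "(nat \<times> nat) list \<Rightarrow> bool" where
  "goodw w \<longleftrightarrow> (\<forall>p\<in>set w. snd p + 1 < fst p)"

definition gfun :: "nat \<Rightarrow> nat \<Rightarrow> real \<Rightarrow> real" where
  "gfun k l t = t ^ l * logsineA t ^ (k - 1 - l)"

lemma okw_simps[simp]: "okw []" "okw ((k,l)#r) \<longleftrightarrow> l < k \<and> okw r"
  by (auto simp: okw_def)
lemma goodw_simps[simp]: "goodw []" "goodw ((k,l)#r) \<longleftrightarrow> l + 1 < k \<and> goodw r"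
  by (auto simp: goodw_def)

lemma ls_cons: assumes "l < k"
  shows "ls_nested ((k,l)#r) s = integral {0..s} (\<lambda>t. gfun k l t * ls_nested r t)"
proof -
  have "int k - 1 - int l = int (k - 1 - l)" using assms by simp
  have "(\<lambda>\<theta>. \<theta> ^ l * (logsineA \<theta> powi (int k - 1 - int l)) * ls_nested r \<theta>) = (\<lambda>t. gfun k l t * ls_nested r t)"
    unfolding gfun_def \<open>int k - 1 - int l = int (k - 1 - l)\<close> power_int_of_nat by simp
  then show ?thesis by simp
qed

lemma ls_cons_fun: assumes "l < k"
  shows "ls_nested ((k,l)#r) = (\<lambda>s. integral {0..s} (\<lambda>t. gfun k l t * ls_nested r t))"
  using ls_cons[OF assms] by auto

lemma gfun_cont: "continuous_on {0<..pi/3} (gfun k l)"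
  unfolding gfun_def by (intro continuous_intros A_cont)

lemma INTG: assumes "l < k" "continuous_on {0..pi/3} h" "0 \<le> s" "s \<le> pi/3"
  shows "(\<lambda>t. gfun k l t * h t) integrable_on {0..s}"
proof -
  have e: "int k - 1 - int l = int (k - 1 - l)" using assms by simp
  have "(\<lambda>t. t ^ l * logsineA t powi (int k - 1 - int l) * h t) integrable_on {0..s}"
    by (rule INT) (use assms in auto)
  then show ?thesis unfolding e by (simp add: gfun_def power_int_of_nat)
qed

lemma CONT: "okw w \<Longrightarrow> continuous_on {0..pi/3} (ls_nested w) \<and> (w \<noteq> [] \<longrightarrow> ls_nested w 0 = 0)"
proof (induction w)
  case Nil
  then show ?case by simp
next
  case (Cons p r)
  obtain k l where p: "p = (k,l)" by force
  have lk: "l < k" and r: "okw r" using Cons.prems p by auto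
  have c: "continuous_on {0..pi/3} (ls_nested r)" using Cons.IH r by blast
  have i: "(\<lambda>t. gfun k l t * ls_nested r t) integrable_on {0..pi/3}"
    by (rule INTG[OF lk c]) auto
  have "continuous_on {0..pi/3} (\<lambda>s. integral {0..s} (\<lambda>t. gfun k l t * ls_nested r t))"
    by (rule indefinite_integral_continuous_1[OF i])
  then have "continuous_on {0..pi/3} (ls_nested (p#r))"
    by (simp add: p ls_cons_fun[OF lk])
  moreover have "ls_nested (p#r) 0 = 0" by (simp add: p ls_cons[OF lk])
  ultimately show ?case by simp
qed

lemma DER: assumes "l < k" "okw r" "0 < s" "s < pi/3"
  shows "(ls_nested ((k,l)#r) has_real_derivative gfun k l s * ls_nested r s) (at s)"
proof -
  have c: "continuous_on {0..pi/3} (ls_nested r)" using CONT assms by blast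
  have i: "(\<lambda>t. gfun k l t * ls_nested r t) integrable_on {0..pi/3}"
    by (rule INTG[OF assms(1) c]) auto
  have cg: "continuous_on {0<..<pi/3} (\<lambda>t. gfun k l t * ls_nested r t)"
    by (intro continuous_intros continuous_on_subset[OF gfun_cont] continuous_on_subset[OF c]) auto
  have "isCont (\<lambda>t. gfun k l t * ls_nested r t) s"
    using continuous_on_interior[OF cg] assms by auto
  then have "continuous (at s within ({0..pi/3} - {})) (\<lambda>t. gfun k l t * ls_nested r t)"
    using continuous_at_imp_continuous_at_within by blast
  from integral_has_vector_derivative_continuous_at[OF i _ _ this]
  have "((\<lambda>u. integral {0..u} (\<lambda>t. gfun k l t * ls_nested r t)) has_vector_derivative
           gfun k l s * ls_nested r s) (at s within {0..pi/3})"
    using assms by auto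
  moreover have "at s within {0..pi/3} = at s"
    using assms by (intro at_within_interior) auto
  ultimately have "((\<lambda>u. integral {0..u} (\<lambda>t. gfun k l t * ls_nested r t)) has_real_derivative
           gfun k l s * ls_nested r s) (at s)"
    by (simp add: has_real_derivative_iff_has_vector_derivative)
  moreover have "ls_nested ((k,l)#r) = (\<lambda>u. integral {0..u} (\<lambda>t. gfun k l t * ls_nested r t))"
    using ls_cons[OF assms(1)] by auto
  ultimately show ?thesis by simp
qed


declare ls_nested.simps(2)[simp del]

fun shuf :: "'a list \<Rightarrow> 'a list \<Rightarrow> 'a list list" where
  "shuf [] ys = [ys]"
| "shuf xs [] = [xs]"
| "shuf (x#xs) (y#ys) = map ((#) x) (shuf xs (y#ys)) @ map ((#) y) (shuf (x#xs) ys)"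

lemma shuf_set: "v \<in> set (shuf a b) \<Longrightarrow> set v \<subseteq> set a \<union> set b"
  by (induction a b arbitrary: v rule: shuf.induct) fastforce+

lemma shuf_okw: "okw a \<Longrightarrow> okw b \<Longrightarrow> v \<in> set (shuf a b) \<Longrightarrow> okw v"
  using shuf_set unfolding okw_def by blast

lemma integral_sum_list:
  assumes "\<forall>u\<in>set us. f u integrable_on S"
  shows "integral S (\<lambda>t. \<Sum>u\<leftarrow>us. f u t) = (\<Sum>u\<leftarrow>us. integral S (f u))
         \<and> (\<lambda>t. \<Sum>u\<leftarrow>us. f u t) integrable_on S"
  using assms
proof (induction us)
  case Nil then show ?case by (simp add: integrable_0)
next
  case (Cons u us)
  then show ?case by (simp add: integral_add integrable_add)
qed

lemma cont_ls: "okw w \<Longrightarrow> continuous_on {0..pi/3} (ls_nested w)"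
  using CONT by blast

lemma sum_step:
  assumes lk: "l < k" and L: "\<forall>u\<in>set L. okw u" and s: "0 \<le> s" "s \<le> pi/3"
    and eq: "\<And>t. t \<in> {0..s} \<Longrightarrow> (\<Sum>u\<leftarrow>L. ls_nested u t) = h t"
  shows "(\<Sum>u\<leftarrow>L. ls_nested ((k,l)#u) s) = integral {0..s} (\<lambda>t. gfun k l t * h t)"
proof -
  have "(\<Sum>u\<leftarrow>L. ls_nested ((k,l)#u) s) = (\<Sum>u\<leftarrow>L. integral {0..s} (\<lambda>t. gfun k l t * ls_nested u t))"
    by (simp add: ls_cons[OF lk])
  also have "\<dots> = integral {0..s} (\<lambda>t. \<Sum>u\<leftarrow>L. gfun k l t * ls_nested u t)"
    using integral_sum_list[of L "\<lambda>u t. gfun k l t * ls_nested u t" "{0..s}"]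
      INTG[OF lk cont_ls s] L by auto
  also have "\<dots> = integral {0..s} (\<lambda>t. gfun k l t * h t)"
    by (rule integral_cong) (simp add: sum_list_const_mult eq)
  finally show ?thesis .
qed

lemma SH: "okw a \<Longrightarrow> okw b \<Longrightarrow> 0 \<le> s \<Longrightarrow> s \<le> pi/3 \<Longrightarrow>
  ls_nested a s * ls_nested b s = (\<Sum>v\<leftarrow>shuf a b. ls_nested v s)"
proof (induction a b arbitrary: s rule: shuf.induct)
  case (1 ys) then show ?case by simp
next
  case (2 v va) then show ?case by simp
next
  case (3 x xs y ys)
  obtain k1 l1 where x: "x = (k1,l1)" by force
  obtain k2 l2 where y: "y = (k2,l2)" by force
  have l1: "l1 < k1" and oxs: "okw xs" using 3 x by auto
  have l2: "l2 < k2" and oys: "okw ys" using 3 y by auto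
  define a where "a = x#xs"
  define b where "b = y#ys"
  have oa: "okw a" and ob: "okw b" using 3 a_def b_def by auto
  have ca: "continuous_on {0..pi/3} (ls_nested a)" using cont_ls[OF oa] .
  have cb: "continuous_on {0..pi/3} (ls_nested b)" using cont_ls[OF ob] .
  have cxs: "continuous_on {0..pi/3} (ls_nested xs)" using cont_ls[OF oxs] .
  have cys: "continuous_on {0..pi/3} (ls_nested ys)" using cont_ls[OF oys] .
  have e1: "(\<Sum>u\<leftarrow>shuf xs b. ls_nested (x#u) s) = integral {0..s} (\<lambda>t. gfun k1 l1 t * (ls_nested xs t * ls_nested b t))"
    unfolding x
  proof (rule sum_step[OF l1 _ 3(5,6)])
    show "\<forall>u\<in>set (shuf xs b). okw u" using shuf_okw[OF oxs ob] by blast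
    show "(\<Sum>u\<leftarrow>shuf xs b. ls_nested u t) = ls_nested xs t * ls_nested b t" if "t \<in> {0..s}" for t
      using 3(1)[of t] oxs ob that 3(6) unfolding b_def by auto
  qed
  have e2: "(\<Sum>u\<leftarrow>shuf a ys. ls_nested (y#u) s) = integral {0..s} (\<lambda>t. gfun k2 l2 t * (ls_nested a t * ls_nested ys t))"
    unfolding y
  proof (rule sum_step[OF l2 _ 3(5,6)])
    show "\<forall>u\<in>set (shuf a ys). okw u" using shuf_okw[OF oa oys] by blast
    show "(\<Sum>u\<leftarrow>shuf a ys. ls_nested u t) = ls_nested a t * ls_nested ys t" if "t \<in> {0..s}" for t
      using 3(2)[of t] oa oys that 3(6) unfolding a_def by auto
  qed
  define f1 where "f1 = (\<lambda>t. gfun k1 l1 t * (ls_nested xs t * ls_nested b t))"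
  define f2 where "f2 = (\<lambda>t. gfun k2 l2 t * (ls_nested a t * ls_nested ys t))"
  have i1: "f1 integrable_on {0..s}" unfolding f1_def
    by (rule INTG[OF l1 _ 3(5,6)]) (intro continuous_intros cxs cb)
  have i2: "f2 integrable_on {0..s}" unfolding f2_def
    by (rule INTG[OF l2 _ 3(5,6)]) (intro continuous_intros ca cys)
  have ftc: "((\<lambda>t. f1 t + f2 t) has_integral (ls_nested a s * ls_nested b s - ls_nested a 0 * ls_nested b 0)) {0..s}"
  proof (rule fundamental_theorem_of_calculus_interior[OF 3(5)])
    show "continuous_on {0..s} (\<lambda>t. ls_nested a t * ls_nested b t)"
      by (rule continuous_on_subset[of "{0..pi/3}"]) (use 3(6) in \<open>auto intro!: continuous_intros ca cb\<close>)
    show "((\<lambda>t. ls_nested a t * ls_nested b t) has_vector_derivative f1 t + f2 t) (at t)"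
      if "t \<in> {0<..<s}" for t
    proof -
      have t: "0 < t" "t < pi/3" using that 3(6) by auto
      have da: "(ls_nested a has_real_derivative gfun k1 l1 t * ls_nested xs t) (at t)"
        unfolding a_def x by (rule DER[OF l1 oxs t])
      have db: "(ls_nested b has_real_derivative gfun k2 l2 t * ls_nested ys t) (at t)"
        unfolding b_def y by (rule DER[OF l2 oys t])
      have "((\<lambda>t. ls_nested a t * ls_nested b t) has_real_derivative
          (gfun k1 l1 t * ls_nested xs t) * ls_nested b t + ls_nested a t * (gfun k2 l2 t * ls_nested ys t)) (at t)"
        using DERIV_mult'[OF da db] by (simp add: algebra_simps)
      then show ?thesis unfolding f1_def f2_def
        by (simp add: has_real_derivative_iff_has_vector_derivative[symmetric] algebra_simps)
    qed
  qed
  have z: "ls_nested a 0 = 0" using CONT[OF oa] a_def by auto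
  have "ls_nested a s * ls_nested b s = integral {0..s} (\<lambda>t. f1 t + f2 t)"
    using ftc z by (simp add: integral_unique)
  also have "\<dots> = integral {0..s} f1 + integral {0..s} f2" by (rule integral_add[OF i1 i2])
  also have "\<dots> = (\<Sum>v\<leftarrow>shuf (x#xs) (y#ys). ls_nested v s)"
    using e1 e2 unfolding f1_def f2_def a_def b_def by (simp add: comp_def)
  finally show ?case unfolding a_def b_def .
qed


type_synonym rep = "(rat \<times> nat \<times> (nat \<times> nat) list) list"

definition rterm :: "rat \<times> nat \<times> (nat \<times> nat) list \<Rightarrow> real \<Rightarrow> real" where
  "rterm p t = real_of_rat (fst p) * t ^ fst (snd p) * ls_nested (snd (snd p)) t"
definition rval :: "rep \<Rightarrow> real \<Rightarrow> real" where
  "rval L t = (\<Sum>p\<leftarrow>L. rterm p t)"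
definition rok :: "rep \<Rightarrow> bool" where
  "rok L \<longleftrightarrow> (\<forall>p\<in>set L. okw (snd (snd p)))"
definition rgood :: "rep \<Rightarrow> bool" where
  "rgood L \<longleftrightarrow> (\<forall>p\<in>set L. goodw (snd (snd p)))"

lemma rval_simps[simp]: "rval [] t = 0" "rval (p#L) t = rterm p t + rval L t"
  "rval (A @ B) t = rval A t + rval B t"
  by (auto simp: rval_def)

lemma goodw_okw: "goodw w \<Longrightarrow> okw w"
  by (auto simp: goodw_def okw_def)

lemma rgood_rok: "rgood L \<Longrightarrow> rok L"
  by (auto simp: rgood_def rok_def goodw_okw)

lemma cont_rterm: "okw (snd (snd p)) \<Longrightarrow> continuous_on {0..pi/3} (rterm p)"
  unfolding rterm_def by (intro continuous_intros cont_ls)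

lemma cont_rval: "rok L \<Longrightarrow> continuous_on {0..pi/3} (rval L)"
proof (induction L)
  case Nil then show ?case by (simp add: rval_def)
next
  case (Cons p L)
  then have "continuous_on {0..pi/3} (\<lambda>t. rterm p t + rval L t)"
    by (intro continuous_intros cont_rterm) (auto simp: rok_def)
  then show ?case by simp
qed

lemma gfun_shift: "gfun (k+m) (l+m) t = t ^ m * gfun k l t"
  by (simp add: gfun_def power_add)

lemma GSTEP: assumes lk: "l < k" and L: "rok L" and s: "0 \<le> s" "s \<le> pi/3"
  shows "integral {0..s} (\<lambda>t. gfun k l t * rval L t) =
         rval (map (\<lambda>p. (fst p, 0, (k + fst (snd p), l + fst (snd p)) # snd (snd p))) L) s"
  using L
proof (induction L)
  case Nil then show ?case by simp
next
  case (Cons p L)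
  obtain c m w where p: "p = (c,m,w)" by (cases p) auto
  have ow: "okw w" and oL: "rok L" using Cons.prems p by (auto simp: rok_def)
  have i1: "(\<lambda>t. gfun k l t * rterm p t) integrable_on {0..s}"
    by (rule INTG[OF lk _ s]) (rule cont_rterm, simp add: p ow)
  have i2: "(\<lambda>t. gfun k l t * rval L t) integrable_on {0..s}"
    by (rule INTG[OF lk _ s]) (rule cont_rval[OF oL])
  have "integral {0..s} (\<lambda>t. gfun k l t * rval (p#L) t) =
        integral {0..s} (\<lambda>t. gfun k l t * rterm p t) + integral {0..s} (\<lambda>t. gfun k l t * rval L t)"
    by (simp add: distrib_left integral_add[OF i1 i2])
  also have "integral {0..s} (\<lambda>t. gfun k l t * rterm p t) =
      integral {0..s} (\<lambda>t. real_of_rat c * (gfun (k+m) (l+m) t * ls_nested w t))"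
    by (rule integral_cong) (simp add: p rterm_def gfun_shift)
  also have "\<dots> = real_of_rat c * ls_nested ((k+m, l+m) # w) s"
    using lk by (simp add: ls_cons)
  finally show ?case using Cons.IH[OF oL] by (simp add: p rterm_def)
qed

definition IBP :: "nat \<Rightarrow> (nat \<times> nat) list \<Rightarrow> rep" where
  "IBP p w = (case w of [] \<Rightarrow> [(1 / of_nat (p+1), p+1, [])]
     | (q # w') \<Rightarrow> [(1 / of_nat (p+1), p+1, w), (- 1 / of_nat (p+1), 0, (fst q + p + 1, snd q + p + 1) # w')])"

lemma IBP_good: "goodw w \<Longrightarrow> rgood (IBP p w)"
  by (cases w) (auto simp: IBP_def rgood_def goodw_def)

lemma IBP_ok: assumes w: "goodw w" and s: "0 \<le> s" "s \<le> pi/3"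
  shows "integral {0..s} (\<lambda>t. t ^ p * ls_nested w t) = rval (IBP p w) s"
proof (cases w)
  case Nil
  have "((\<lambda>t. t ^ p) has_integral (s^(p+1) / (p+1) - 0^(p+1)/(p+1))) {0..s}"
  proof (rule fundamental_theorem_of_calculus_interior[OF s(1)])
    show "continuous_on {0..s} (\<lambda>t. t^(p+1) / real (p+1))" by (intro continuous_intros) auto
    show "((\<lambda>t. t^(p+1) / real (p+1)) has_vector_derivative t ^ p) (at t)" for t
    proof -
      have nz: "real (p+1) \<noteq> 0" by simp
      have "((\<lambda>t. t^(p+1)) has_real_derivative real (p+1) * t^p) (at t)"
        using DERIV_pow[of "p+1" t] by simp
      then have "((\<lambda>t. t^(p+1) / real (p+1)) has_real_derivative real (p+1) * t^p / real (p+1)) (at t)"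
        by (rule DERIV_cdivide)
      then show ?thesis using nz by (simp add: has_real_derivative_iff_has_vector_derivative)
    qed
  qed
  then show ?thesis using Nil by (simp add: IBP_def rterm_def integral_unique of_rat_divide of_rat_add of_rat_of_nat_eq of_rat_minus)
next
  case (Cons q w')
  obtain k' l' where q: "q = (k',l')" by force
  have lk: "l' < k'" and ow': "okw w'" and ow: "okw w" using w Cons q goodw_okw by auto
  have lk2: "l'+p+1 < k'+p+1" using lk by simp
  define H where "H = (\<lambda>t. (t^(p+1) * ls_nested w t - ls_nested ((k'+p+1, l'+p+1) # w') t) / real (p+1))"
  have "((\<lambda>t. t ^ p * ls_nested w t) has_integral (H s - H 0)) {0..s}"
  proof (rule fundamental_theorem_of_calculus_interior[OF s(1)])
    show "continuous_on {0..s} H" unfolding H_def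
      by (rule continuous_on_subset[of "{0..pi/3}"])
         (use s ow ow' lk2 in \<open>auto intro!: continuous_intros cont_ls\<close>)
    show "(H has_vector_derivative t ^ p * ls_nested w t) (at t)" if "t \<in> {0<..<s}" for t
    proof -
      have t: "0 < t" "t < pi/3" using that s by auto
      have d1: "(ls_nested w has_real_derivative gfun k' l' t * ls_nested w' t) (at t)"
        unfolding Cons q by (rule DER[OF lk ow' t])
      have d2: "(ls_nested ((k'+p+1, l'+p+1) # w') has_real_derivative gfun (k'+p+1) (l'+p+1) t * ls_nested w' t) (at t)"
        by (rule DER[OF lk2 ow' t])
      have g: "gfun (k'+p+1) (l'+p+1) t = t^(p+1) * gfun k' l' t"
        using gfun_shift[of k' "p+1" l' t] by (simp add: add.assoc)
      have dp: "((\<lambda>t. t^(p+1)) has_real_derivative real (p+1) * t^p) (at t)"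
        using DERIV_pow[of "p+1" t] by simp
      have "((\<lambda>t. t^(p+1) * ls_nested w t - ls_nested ((k'+p+1, l'+p+1) # w') t) has_real_derivative
              (t^(p+1) * (gfun k' l' t * ls_nested w' t) + real (p+1) * t^p * ls_nested w t)
              - gfun (k'+p+1) (l'+p+1) t * ls_nested w' t) (at t)"
        by (rule DERIV_diff[OF DERIV_mult'[OF dp d1] d2])
      from DERIV_cdivide[OF this, of "real (p+1)"]
      have "(H has_real_derivative ((t^(p+1) * (gfun k' l' t * ls_nested w' t) + real (p+1) * t^p * ls_nested w t)
              - gfun (k'+p+1) (l'+p+1) t * ls_nested w' t) / real (p+1)) (at t)"
        unfolding H_def .
      moreover have eqd: "(a + real p * a) / (1 + real p) = a" for a :: real
      proof -
        have "a + real p * a = (1 + real p) * a" by algebra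
        moreover have "1 + real p \<noteq> 0" by linarith
        ultimately show ?thesis by simp
      qed
      ultimately show ?thesis unfolding g has_real_derivative_iff_has_vector_derivative
        by (simp add: algebra_simps)
    qed
  qed
  moreover have "ls_nested w 0 = 0" "ls_nested ((k'+p+1, l'+p+1) # w') 0 = 0"
    using CONT[OF ow] CONT[of "(k'+p+1, l'+p+1) # w'"] ow' lk2 Cons by auto
  ultimately have "integral {0..s} (\<lambda>t. t ^ p * ls_nested w t) = H s"
    by (simp add: integral_unique H_def)
  then show ?thesis
    by (simp add: H_def IBP_def Cons q rterm_def of_rat_divide of_rat_add of_rat_of_nat_eq of_rat_minus diff_divide_distrib add_ac)
qed


definition rscale :: "rat \<Rightarrow> rep \<Rightarrow> rep" where
  "rscale c Q = map (\<lambda>q. (c * fst q, fst (snd q), snd (snd q))) Q"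

lemma rval_scale: "rval (rscale c Q) s = real_of_rat c * rval Q s"
  by (induction Q) (auto simp: rscale_def rterm_def of_rat_mult algebra_simps)

lemma rgood_scale: "rgood Q \<Longrightarrow> rgood (rscale c Q)"
  by (auto simp: rscale_def rgood_def)

definition ibpL :: "nat \<Rightarrow> rep \<Rightarrow> rep" where
  "ibpL l L = concat (map (\<lambda>p. rscale (fst p) (IBP (l + fst (snd p)) (snd (snd p)))) L)"

lemma ibpL_simps: "ibpL l [] = []" "ibpL l (p#L) = rscale (fst p) (IBP (l + fst (snd p)) (snd (snd p))) @ ibpL l L"
  by (auto simp: ibpL_def)

lemma rgood_ibpL: "rgood L \<Longrightarrow> rgood (ibpL l L)"
proof (induction L)
  case Nil then show ?case by (simp add: ibpL_simps rgood_def)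
next
  case (Cons p L)
  have "rgood (rscale (fst p) (IBP (l + fst (snd p)) (snd (snd p))))"
    using Cons.prems by (intro rgood_scale IBP_good) (auto simp: rgood_def)
  moreover have "rgood (ibpL l L)" using Cons by (auto simp: rgood_def)
  ultimately show ?case by (auto simp: ibpL_simps rgood_def)
qed

lemma BSTEP: assumes L: "rgood L" and s: "0 \<le> s" "s \<le> pi/3"
  shows "integral {0..s} (\<lambda>t. t ^ l * rval L t) = rval (ibpL l L) s"
  using L
proof (induction L)
  case Nil then show ?case by (simp add: ibpL_simps)
next
  case (Cons p L)
  obtain c m w where p: "p = (c,m,w)" by (cases p) auto
  have gw: "goodw w" and gL: "rgood L" using Cons.prems p by (auto simp: rgood_def)
  have sub: "{0..s} \<subseteq> {0..pi/3}" using s by auto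
  have i1: "(\<lambda>t. t ^ l * rterm p t) integrable_on {0..s}"
    by (rule integrable_continuous_interval, rule continuous_on_subset[OF _ sub])
       (intro continuous_intros cont_rterm, simp add: p goodw_okw[OF gw])
  have i2: "(\<lambda>t. t ^ l * rval L t) integrable_on {0..s}"
    by (rule integrable_continuous_interval, rule continuous_on_subset[OF _ sub])
       (intro continuous_intros cont_rval rgood_rok gL)
  have "integral {0..s} (\<lambda>t. t ^ l * rval (p#L) t) =
        integral {0..s} (\<lambda>t. t ^ l * rterm p t) + integral {0..s} (\<lambda>t. t ^ l * rval L t)"
    by (simp add: distrib_left integral_add[OF i1 i2])
  also have "integral {0..s} (\<lambda>t. t ^ l * rterm p t) =
      integral {0..s} (\<lambda>t. real_of_rat c * (t ^ (l+m) * ls_nested w t))"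
    by (rule integral_cong) (simp add: p rterm_def power_add)
  also have "\<dots> = real_of_rat c * rval (IBP (l+m) w) s"
    using IBP_ok[OF gw s] by simp
  finally show ?case using Cons.IH[OF gL] by (simp add: p ibpL_simps rval_scale)
qed

lemma RED: "okw w \<Longrightarrow> \<exists>L. rgood L \<and> (\<forall>s\<in>{0..pi/3}. ls_nested w s = rval L s)"
proof (induction w)
  case Nil
  show ?case
    by (rule exI[of _ "[(1,0,[])]"]) (simp add: rgood_def rterm_def ls_nested.simps)
next
  case (Cons q r)
  obtain k l where q: "q = (k,l)" by force
  have lk: "l < k" and orr: "okw r" using Cons.prems q by auto
  obtain L where gL: "rgood L" and eL: "\<forall>s\<in>{0..pi/3}. ls_nested r s = rval L s"
    using Cons.IH[OF orr] by blast
  have base: "ls_nested ((k,l)#r) s = integral {0..s} (\<lambda>t. gfun k l t * rval L t)"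
    if s: "s \<in> {0..pi/3}" for s
    unfolding ls_cons[OF lk] by (rule integral_cong) (use eL s in auto)
  show ?case
  proof (cases "l + 1 < k")
    case True
    let ?L = "map (\<lambda>p. (fst p, 0, (k + fst (snd p), l + fst (snd p)) # snd (snd p))) L"
    have "rgood ?L" using gL True by (auto simp: rgood_def)
    moreover have "\<forall>s\<in>{0..pi/3}. ls_nested (q#r) s = rval ?L s"
      using base GSTEP[OF lk rgood_rok[OF gL]] q by auto
    ultimately show ?thesis by blast
  next
    case False
    then have k: "k - Suc l = 0" using lk by simp
    have "gfun k l t = t ^ l" for t by (simp add: gfun_def k)
    then have "\<forall>s\<in>{0..pi/3}. ls_nested (q#r) s = rval (ibpL l L) s"
      using base BSTEP[OF gL] q by auto
    then show ?thesis using rgood_ibpL[OF gL] by blast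
  qed
qed


lemma shuf_sum: "okw a \<Longrightarrow> \<forall>v\<in>set V. okw v \<Longrightarrow>
  ls_nested a (pi/3) * (\<Sum>v\<leftarrow>V. ls_nested v (pi/3)) = (\<Sum>u\<leftarrow>concat (map (shuf a) V). ls_nested u (pi/3))"
proof (induction V)
  case Nil then show ?case by simp
next
  case (Cons v V)
  have "ls_nested a (pi/3) * ls_nested v (pi/3) = (\<Sum>u\<leftarrow>shuf a v. ls_nested u (pi/3))"
    using Cons.prems by (intro SH) auto
  then show ?case using Cons by (simp add: distrib_left)
qed

lemma PROD: "\<forall>w\<in>set ws. okw w \<Longrightarrow>
  \<exists>V. (\<forall>v\<in>set V. okw v) \<and> (\<Prod>w\<leftarrow>ws. ls_nested w (pi/3)) = (\<Sum>v\<leftarrow>V. ls_nested v (pi/3))"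
proof (induction ws)
  case Nil
  show ?case by (rule exI[of _ "[[]]"]) (simp add: ls_nested.simps)
next
  case (Cons a ws)
  obtain V where V: "\<forall>v\<in>set V. okw v" "(\<Prod>w\<leftarrow>ws. ls_nested w (pi/3)) = (\<Sum>v\<leftarrow>V. ls_nested v (pi/3))"
    using Cons by auto
  have oa: "okw a" using Cons.prems by auto
  show ?case
  proof (intro exI conjI)
    show "\<forall>u\<in>set (concat (map (shuf a) V)). okw u" using shuf_okw[OF oa] V(1) by auto
    show "(\<Prod>w\<leftarrow>a # ws. ls_nested w (pi/3)) = (\<Sum>u\<leftarrow>concat (map (shuf a) V). ls_nested u (pi/3))"
      using shuf_sum[OF oa V(1)] V(2) by simp
  qed
qed

definition PP :: "real \<Rightarrow> bool" where
  "PP x \<longleftrightarrow> (\<exists>T :: (rat \<times> nat \<times> (nat \<times> nat) list) list.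
           (\<forall>(c, m, kl') \<in> set T. \<forall>(k, l) \<in> set kl'. 1 \<le> k \<and> int k - 1 - int l > 0) \<and>
           x = (\<Sum>(c, m, kl') \<leftarrow> T. real_of_rat c * pi ^ m * Ls kl' (pi / 3)))"

lemma PP_0: "PP 0"
  unfolding PP_def by (rule exI[of _ "[]"]) simp

lemma PP_add: "PP a \<Longrightarrow> PP b \<Longrightarrow> PP (a + b)"
  unfolding PP_def
proof (elim exE conjE)
  fix T1 T2
  assume "\<forall>(c, m, kl') \<in> set T1. \<forall>(k, l) \<in> set kl'. 1 \<le> k \<and> int k - 1 - int l > 0"
    "a = (\<Sum>(c, m, kl') \<leftarrow> T1. real_of_rat c * pi ^ m * Ls kl' (pi / 3))"
    "\<forall>(c, m, kl') \<in> set T2. \<forall>(k, l) \<in> set kl'. 1 \<le> k \<and> int k - 1 - int l > 0"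
    "b = (\<Sum>(c, m, kl') \<leftarrow> T2. real_of_rat c * pi ^ m * Ls kl' (pi / 3))"
  then show "\<exists>T :: (rat \<times> nat \<times> (nat \<times> nat) list) list.
           (\<forall>(c, m, kl') \<in> set T. \<forall>(k, l) \<in> set kl'. 1 \<le> k \<and> int k - 1 - int l > 0) \<and>
           a + b = (\<Sum>(c, m, kl') \<leftarrow> T. real_of_rat c * pi ^ m * Ls kl' (pi / 3))"
    by (intro exI[of _ "T1 @ T2"]) auto
qed

lemma PP_good: assumes "goodw w"
  shows "PP (real_of_rat q * pi ^ m * ls_nested w (pi/3))"
  unfolding PP_def
proof (intro exI conjI)
  let ?T = "[(q * (-1) ^ length w, m, rev w)]"
  show "\<forall>(c, m, kl') \<in> set ?T. \<forall>(k, l) \<in> set kl'. 1 \<le> k \<and> int k - 1 - int l > 0"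
    using assms by (auto simp: goodw_def)
  have "(-1::real) ^ length w * (-1) ^ length w = 1"
    by (simp add: power_mult_distrib[symmetric])
  then show "real_of_rat q * pi ^ m * ls_nested w (pi/3) =
     (\<Sum>(c, m, kl') \<leftarrow> ?T. real_of_rat c * pi ^ m * Ls kl' (pi / 3))"
    by (simp add: Ls_def of_rat_mult of_rat_power algebra_simps)
qed

lemma PP_rval: "rgood L \<Longrightarrow> PP (rval L (pi/3))"
proof (induction L)
  case Nil then show ?case by (simp add: PP_0)
next
  case (Cons p L)
  obtain c m w where p: "p = (c,m,w)" by (cases p) auto
  have gw: "goodw w" and gL: "rgood L" using Cons.prems p by (auto simp: rgood_def)
  have "rterm p (pi/3) = real_of_rat (c * (1/3)^m) * pi ^ m * ls_nested w (pi/3)"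
    by (simp add: p rterm_def of_rat_mult of_rat_power of_rat_divide power_divide)
  then have "PP (rterm p (pi/3))" using PP_good[OF gw] by simp
  then show ?case using Cons.IH[OF gL] by (simp add: PP_add)
qed

lemma PP_ok: "okw w \<Longrightarrow> PP (ls_nested w (pi/3))"
proof -
  assume "okw w"
  from RED[OF this] obtain L where "rgood L" "\<forall>s\<in>{0..pi/3}. ls_nested w s = rval L s" by blast
  moreover have "pi/3 \<in> {0..pi/3}" by simp
  ultimately show ?thesis using PP_rval by metis
qed

lemma PP_sum: "\<forall>v\<in>set V. okw v \<Longrightarrow> PP (\<Sum>v\<leftarrow>V. ls_nested v (pi/3))"
  by (induction V) (auto simp: PP_0 PP_ok PP_add)

lemma PP_scale: "PP x \<Longrightarrow> PP (real_of_rat q * x)"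
  unfolding PP_def
proof (elim exE conjE)
  fix T
  assume A: "\<forall>(c, m, kl') \<in> set T. \<forall>(k, l) \<in> set kl'. 1 \<le> k \<and> int k - 1 - int l > 0"
    and B: "x = (\<Sum>(c, m, kl') \<leftarrow> T. real_of_rat c * pi ^ m * Ls kl' (pi / 3))"
  let ?T = "map (\<lambda>(c, m, kl'). (q * c, m, kl')) T"
  have "real_of_rat q * (\<Sum>(c, m, kl') \<leftarrow> T. real_of_rat c * pi ^ m * Ls kl' (pi / 3))
        = (\<Sum>(c, m, kl') \<leftarrow> ?T. real_of_rat c * pi ^ m * Ls kl' (pi / 3))"
    by (induction T) (auto simp: of_rat_mult algebra_simps)
  moreover have "\<forall>(c, m, kl') \<in> set ?T. \<forall>(k, l) \<in> set kl'. 1 \<le> k \<and> int k - 1 - int l > 0"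
    using A by auto
  ultimately show "\<exists>T :: (rat \<times> nat \<times> (nat \<times> nat) list) list.
           (\<forall>(c, m, kl') \<in> set T. \<forall>(k, l) \<in> set kl'. 1 \<le> k \<and> int k - 1 - int l > 0) \<and>
           real_of_rat q * x = (\<Sum>(c, m, kl') \<leftarrow> T. real_of_rat c * pi ^ m * Ls kl' (pi / 3))"
    using B by blast
qed

lemma prod_Ls: "(\<Prod>kl\<leftarrow>F. Ls kl (pi/3)) =
  real_of_rat (\<Prod>kl\<leftarrow>F. (-1) ^ length kl) * (\<Prod>w\<leftarrow>map rev F. ls_nested w (pi/3))"
  by (induction F) (auto simp: Ls_def of_rat_mult of_rat_power)

theorem corollary2p3:
  fixes F :: "(nat \<times> nat) list list"
  assumes "\<forall>kl \<in> set F. \<forall>(k, l) \<in> set kl. 1 \<le> k \<and> int k - 1 - int l \<ge> 0"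
  shows "\<exists>T :: (rat \<times> nat \<times> (nat \<times> nat) list) list.
           (\<forall>(c, m, kl') \<in> set T. \<forall>(k, l) \<in> set kl'. 1 \<le> k \<and> int k - 1 - int l > 0) \<and>
           (\<Prod>kl \<leftarrow> F. Ls kl (pi / 3)) =
             (\<Sum>(c, m, kl') \<leftarrow> T. real_of_rat c * pi ^ m * Ls kl' (pi / 3))"
proof -
  have "\<forall>w\<in>set (map rev F). okw w"
    using assms by (fastforce simp: okw_def)
  then obtain V where V: "\<forall>v\<in>set V. okw v"
    "(\<Prod>w\<leftarrow>map rev F. ls_nested w (pi/3)) = (\<Sum>v\<leftarrow>V. ls_nested v (pi/3))"
    using PROD by blast
  have "PP (\<Prod>kl \<leftarrow> F. Ls kl (pi / 3))"
    unfolding prod_Ls V(2) by (intro PP_scale PP_sum V(1))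
  then show ?thesis unfolding PP_def .
qed

end
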